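(* Let $M$ be a point-line configuration of rank $3$ on $[d]$, and let $x,x_1,\dots,x_n$ be $3$-element subsets of $[d]$ not belonging to $\mathcal{C}_3(M)$. (i) If $N$ is a point-line configuration on $[d]$ with $N\ge M$, then $N\ge M^x$ if and only if $x\in\mathcal{C}_3(N)$. (ii) Suppose that $x_{i+1}\in\mathcal{C}_3(M^{x_i})$ for every $i\in[n]$, where $x_{n+1}:=x_1$, and that every $y\in\mathcal{C}_3(M^{x_n})$ belongs to $\mathcal{C}_3(M)\cup\{x_1,\dots,x_n\}$. Then $M^{x_n}$ is a minimal element (for the dependency order) of the set $\mathcal{B}=\{N \text{ matroid on }[d]: N>M,\ \mathcal{C}_1(N)=\emptyset,\ \mathcal{C}_2(N)=\emptyset\}$.
   Context: A matroid $N$ on $[d]$ has dependent sets $\mathcal{D}(N)$ and circuits $\mathcal{C}(N)$; $\mathcal{C}_i(N)$ is the set of circuits of size $i$. A point-line configuration on $[d]$ is a simple matroid (no circuits of size $1$ or $2$) of rank at most $3$; its lines are the maximal subsets of size $\ge3$ and rank $2$, and a $3$-subset is dependent (equivalently a circuit) iff it lies in a line. Dependency order: $N_1\le N_2$ iff $\mathcal{D}(N_1)\subseteq\mathcal{D}(N_2)$; $N_1<N_2$ iff moreover $N_1\neq N_2$. For a $3$-subset $x\notin\mathcal{C}_3(M)$, $M^x$ denotes the unique minimal (for the dependency order) point-line configuration on $[d]$ in which every $3$-subset of every line of $M$ is dependent and $x$ is dependent. *)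

theory Defs
  imports Main
begin

text \<open>A matroid on [d] = {1..d} is represented by its family of independent sets.\<close>

definition matroid :: "nat \<Rightarrow> nat set set \<Rightarrow> bool" where
  "matroid d N \<longleftrightarrow>
     N \<subseteq> Pow {1..d} \<and> {} \<in> N \<and>
     (\<forall>X\<in>N. \<forall>Y. Y \<subseteq> X \<longrightarrow> Y \<in> N) \<and>
     (\<forall>X\<in>N. \<forall>Y\<in>N. card X < card Y \<longrightarrow> (\<exists>e\<in>Y - X. insert e X \<in> N))"

definition dependents :: "nat \<Rightarrow> nat set set \<Rightarrow> nat set set" where
  "dependents d N = {X. X \<subseteq> {1..d} \<and> X \<notin> N}"

definition circuits :: "nat \<Rightarrow> nat set set \<Rightarrow> nat set set" where
  "circuits d N = {C \<in> dependents d N. \<forall>Y. Y \<subset> C \<longrightarrow> Y \<notin> dependents d N}"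

definition circuits_size :: "nat \<Rightarrow> nat set set \<Rightarrow> nat \<Rightarrow> nat set set" where
  "circuits_size d N i = {C \<in> circuits d N. card C = i}"

definition mrank :: "nat set set \<Rightarrow> nat set \<Rightarrow> nat" where
  "mrank N X = Max (card ` {I \<in> N. I \<subseteq> X})"

definition point_line_config :: "nat \<Rightarrow> nat set set \<Rightarrow> bool" where
  "point_line_config d N \<longleftrightarrow> matroid d N \<and> circuits_size d N 1 = {} \<and>
     circuits_size d N 2 = {} \<and> mrank N {1..d} \<le> 3"

definition lines :: "nat \<Rightarrow> nat set set \<Rightarrow> nat set set" where
  "lines d N = {L. L \<subseteq> {1..d} \<and> card L \<ge> 3 \<and> mrank N L = 2 \<and>
     (\<forall>L'. L \<subset> L' \<and> L' \<subseteq> {1..d} \<and> card L' \<ge> 3 \<longrightarrow> mrank N L' \<noteq> 2)}"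

definition dep_le :: "nat \<Rightarrow> nat set set \<Rightarrow> nat set set \<Rightarrow> bool" where
  "dep_le d N1 N2 \<longleftrightarrow> dependents d N1 \<subseteq> dependents d N2"

definition dep_lt :: "nat \<Rightarrow> nat set set \<Rightarrow> nat set set \<Rightarrow> bool" where
  "dep_lt d N1 N2 \<longleftrightarrow> dep_le d N1 N2 \<and> N1 \<noteq> N2"

definition minimal_in :: "nat \<Rightarrow> nat set set \<Rightarrow> nat set set set \<Rightarrow> bool" where
  "minimal_in d N S \<longleftrightarrow> N \<in> S \<and> \<not> (\<exists>N'\<in>S. dep_lt d N' N)"

text \<open>The candidates for M^x, and M^x itself as the unique minimal one.\<close>
definition ext_candidates :: "nat \<Rightarrow> nat set set \<Rightarrow> nat set \<Rightarrow> nat set set set" where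
  "ext_candidates d M x = {N. point_line_config d N \<and>
     (\<forall>L\<in>lines d M. \<forall>T. T \<subseteq> L \<and> card T = 3 \<longrightarrow> T \<in> dependents d N) \<and>
     x \<in> dependents d N}"

definition ext :: "nat \<Rightarrow> nat set set \<Rightarrow> nat set \<Rightarrow> nat set set" where
  "ext d M x = (THE N. minimal_in d N (ext_candidates d M x))"

end

theory Submission
  imports Defs
begin

definition closed3 :: "nat set set \<Rightarrow> bool" where
  "closed3 T \<longleftrightarrow> (\<forall>a b c e. a\<noteq>b \<longrightarrow> a\<noteq>c \<longrightarrow> a\<noteq>e \<longrightarrow> b\<noteq>c \<longrightarrow> b\<noteq>e \<longrightarrow> c\<noteq>e \<longrightarrow>
      {a,b,c} \<in> T \<longrightarrow> {a,b,e} \<in> T \<longrightarrow> {a,c,e} \<in> T)"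

lemma closed3D:
  assumes "closed3 T" "a\<noteq>b" "a\<noteq>c" "a\<noteq>e" "b\<noteq>c" "b\<noteq>e" "c\<noteq>e" "{a,b,c} \<in> T" "{a,b,e} \<in> T"
  shows "{a,c,e} \<in> T"
  using assms(1)[unfolded closed3_def, rule_format, of a b c e] assms by blast

lemma three_split:
  assumes "a \<in> {u,v,w}" "u\<noteq>v" "u\<noteq>w" "v\<noteq>w"
  shows "\<exists>p q. {u,v,w} = {a,p,q} \<and> p\<noteq>q \<and> p\<noteq>a \<and> q\<noteq>a"
proof -
  consider "a = u" | "a = v" | "a = w" using assms(1) by blast
  thus ?thesis
  proof cases
    case 1 thus ?thesis using assms by blast
  next
    case 2 hence "{u,v,w} = {a,u,w}" by blast
    thus ?thesis using assms 2 by blast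
  next
    case 3 hence "{u,v,w} = {a,u,v}" by blast
    thus ?thesis using assms 3 by blast
  qed
qed

lemma comb:
  assumes cl: "closed3 T" and ab: "a \<noteq> b" and uvw: "u\<noteq>v" "u\<noteq>w" "v\<noteq>w"
    and Y: "{u,v,w} \<notin> T" and nsub: "\<not> {a,b} \<subseteq> {u,v,w}"
  shows "\<exists>f\<in>{u,v,w} - {a,b}. insert f {a,b} \<notin> T"
proof (rule ccontr)
  assume H: "\<not> ?thesis"
  have H': "{a,b,f} \<in> T" "{b,a,f} \<in> T" if "f \<in> {u,v,w}" "f \<notin> {a,b}" for f
  proof -
    have "{f,a,b} \<in> T" using H that by blast
    moreover have "{a,b,f} = {f,a,b}" "{b,a,f} = {f,a,b}" by blast+
    ultimately show "{a,b,f} \<in> T" "{b,a,f} \<in> T" by simp_all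
  qed
  show False
  proof (cases "a \<in> {u,v,w}")
    case True
    hence bn: "b \<notin> {u,v,w}" using nsub by blast
    obtain p q where pq: "{u,v,w} = {a,p,q}" "p \<noteq> q" "p \<noteq> a" "q \<noteq> a"
      using three_split[OF True uvw] by blast
    have pq': "p \<in> {u,v,w}" "q \<in> {u,v,w}" "p \<notin> {a,b}" "q \<notin> {a,b}" using pq bn by blast+
    have "{a,b,p} \<in> T" "{a,b,q} \<in> T" using H'(1)[OF pq'(1,3)] H'(1)[OF pq'(2,4)] .
    hence "{a,p,q} \<in> T" using closed3D[OF cl, of a b p q] pq pq' ab by blast
    thus False using Y pq by simp
  next
    case aF: False
    show False
    proof (cases "b \<in> {u,v,w}")
      case True
      obtain p q where pq: "{u,v,w} = {b,p,q}" "p \<noteq> q" "p \<noteq> b" "q \<noteq> b"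
        using three_split[OF True uvw] by blast
      have pq': "p \<in> {u,v,w}" "q \<in> {u,v,w}" "p \<notin> {a,b}" "q \<notin> {a,b}" using pq aF by blast+
      have "{b,a,p} \<in> T" "{b,a,q} \<in> T" using H'(2)[OF pq'(1,3)] H'(2)[OF pq'(2,4)] .
      hence "{b,p,q} \<in> T" using closed3D[OF cl, of b a p q] pq pq' ab by blast
      thus False using Y pq by simp
    next
      case False
      have W: "u \<notin> {a,b}" "v \<notin> {a,b}" "w \<notin> {a,b}" using aF False by blast+
      have T3: "{a,b,u} \<in> T" "{a,b,v} \<in> T" "{a,b,w} \<in> T" using H'(1)[OF _ W(1)] H'(1)[OF _ W(2)] H'(1)[OF _ W(3)] by blast+
      have "{a,u,v} \<in> T" using closed3D[OF cl, of a b u v] T3 W uvw ab by blast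
      moreover have "{a,u,w} \<in> T" using closed3D[OF cl, of a b u w] T3 W uvw ab by blast
      moreover have "{u,a,v} = {a,u,v}" "{u,a,w} = {a,u,w}" by blast+
      ultimately have "{u,a,v} \<in> T" "{u,a,w} \<in> T" by simp_all
      hence "{u,v,w} \<in> T" using closed3D[OF cl, of u a v w] W uvw by blast
      thus False using Y by simp
    qed
  qed
qed


lemma plc_matroid: "point_line_config d N \<Longrightarrow> matroid d N"
  by (simp add: point_line_config_def)

lemma matroid_sub: "matroid d N \<Longrightarrow> X \<in> N \<Longrightarrow> X \<subseteq> {1..d}"
  unfolding matroid_def by blast

lemma plc_small_indep:
  assumes P: "point_line_config d N" and X: "X \<subseteq> {1..d}" "card X \<le> 2"
  shows "X \<in> N"
proof (rule ccontr)
  assume XN: "X \<notin> N"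
  obtain Y where Y: "Y \<subseteq> X \<and> Y \<notin> N" and Ymin: "\<forall>Z. Z \<subseteq> X \<and> Z \<notin> N \<longrightarrow> card Y \<le> card Z"
    using ex_has_least_nat[of "\<lambda>Y. Y \<subseteq> X \<and> Y \<notin> N" X card] XN by blast
  have fX: "finite X" using X finite_subset by blast
  have M: "matroid d N" using P by (simp add: point_line_config_def)
  have Yd: "Y \<in> dependents d N" using Y X unfolding dependents_def by auto
  have Yc: "Y \<in> circuits d N"
    unfolding circuits_def
  proof (intro CollectI conjI allI impI Yd)
    fix Z assume Z: "Z \<subset> Y"
    have "finite Y" using Y fX finite_subset by blast
    hence "card Z < card Y" using Z psubset_card_mono by blast
    show "Z \<notin> dependents d N"
    proof
      assume "Z \<in> dependents d N"
      hence "Z \<notin> N" by (simp add: dependents_def)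
      moreover have "Z \<subseteq> X" using Z Y by blast
      ultimately have "card Y \<le> card Z" using Ymin by blast
      thus False using \<open>card Z < card Y\<close> by simp
    qed
  qed
  have "{} \<in> N" using M by (simp add: matroid_def)
  hence "Y \<noteq> {}" using Y by blast
  moreover have "finite Y" using Y fX finite_subset by blast
  ultimately have "card Y \<ge> 1" by (simp add: Suc_le_eq card_gt_0_iff)
  moreover have "card Y \<le> card X" using card_mono[OF fX] Y by blast
  hence "card Y \<le> 2" using X(2) by linarith
  ultimately have "Y \<in> circuits_size d N 1 \<or> Y \<in> circuits_size d N 2"
    using Yc unfolding circuits_size_def by auto
  moreover have "circuits_size d N 1 = {}" "circuits_size d N 2 = {}" using P by (simp_all add: point_line_config_def)
  ultimately show False by blast
qed

lemma plc_dep3: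
  assumes P: "point_line_config d N" and X: "X \<subseteq> {1..d}" "card X = 3"
  shows "X \<in> circuits_size d N 3 \<longleftrightarrow> X \<notin> N"
proof
  assume "X \<in> circuits_size d N 3" thus "X \<notin> N"
    unfolding circuits_size_def circuits_def dependents_def by blast
next
  assume XN: "X \<notin> N"
  have fX: "finite X" using X finite_subset by blast
  show "X \<in> circuits_size d N 3"
    unfolding circuits_size_def circuits_def
  proof (intro CollectI conjI allI impI X(2))
    show "X \<in> dependents d N" using X(1) XN unfolding dependents_def by blast
    fix Z assume Z: "Z \<subset> X"
    hence "card Z < 3" using psubset_card_mono[OF fX] X(2) by metis
    moreover have "Z \<subseteq> {1..d}" using Z X(1) by blast
    ultimately have "Z \<in> N" using plc_small_indep[OF P, of Z] by simp
    thus "Z \<notin> dependents d N" unfolding dependents_def by blast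
  qed
qed

lemma mrank_ge:
  assumes "finite X" "I \<in> N" "I \<subseteq> X"
  shows "card I \<le> mrank N X"
proof -
  have "finite {I \<in> N. I \<subseteq> X}" using finite_subset[of "{I \<in> N. I \<subseteq> X}" "Pow X"] assms(1) by auto
  moreover have "card I \<in> card ` {I \<in> N. I \<subseteq> X}" using assms by blast
  ultimately show ?thesis unfolding mrank_def using Max_ge[OF finite_imageI] by blast
qed

lemma plc_big:
  assumes P: "point_line_config d N" and X: "X \<subseteq> {1..d}" "card X \<ge> 4"
  shows "X \<notin> N"
proof
  assume "X \<in> N"
  hence "card X \<le> mrank N {1..d}" using mrank_ge[of "{1..d}" X N] X(1) by blast
  moreover have "mrank N {1..d} \<le> 3" using P by (simp add: point_line_config_def)
  ultimately show False using X(2) by linarith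
qed

lemma plc_closed:
  assumes P: "point_line_config d N" and S: "{a,b,c,e} \<subseteq> {1..d}"
    and dist: "a\<noteq>b" "a\<noteq>c" "a\<noteq>e" "b\<noteq>c" "b\<noteq>e" "c\<noteq>e"
    and D: "{a,b,c} \<notin> N" "{a,b,e} \<notin> N"
  shows "{a,c,e} \<notin> N"
proof
  assume ace: "{a,c,e} \<in> N"
  have c2: "card {a,b} \<le> 2" using dist(1) by simp
  have "{a,b} \<subseteq> {1..d}" using S by blast
  hence ab: "{a,b} \<in> N" using plc_small_indep[OF P _ c2] by blast
  have M: "matroid d N" using P by (simp add: point_line_config_def)
  have lt: "card {a,b} < card {a,c,e}" using dist by simp
  have "\<forall>X\<in>N. \<forall>Y\<in>N. card X < card Y \<longrightarrow> (\<exists>e\<in>Y - X. insert e X \<in> N)"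
    using M unfolding matroid_def by simp
  hence "card {a,b} < card {a,c,e} \<longrightarrow> (\<exists>g\<in>{a,c,e} - {a,b}. insert g {a,b} \<in> N)"
    using ab ace by blast
  then obtain f where f: "f \<in> {a,c,e} - {a,b}" "insert f {a,b} \<in> N"
    using lt by blast
  have "f = c \<or> f = e" using f(1) by blast
  moreover have "insert c {a,b} = {a,b,c}" "insert e {a,b} = {a,b,e}" by blast+
  ultimately show False using f(2) D by metis
qed




definition pav :: "nat \<Rightarrow> nat set set \<Rightarrow> nat set set" where
  "pav d T = {X. X \<subseteq> {1..d} \<and> (card X \<le> 2 \<or> (card X = 3 \<and> X \<notin> T))}"

lemma mrank_le:
  assumes "finite X" "{} \<in> N" "\<And>I. I \<in> N \<Longrightarrow> I \<subseteq> X \<Longrightarrow> card I \<le> k"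
  shows "mrank N X \<le> k"
proof -
  have f: "finite {I \<in> N. I \<subseteq> X}" using finite_subset[of "{I \<in> N. I \<subseteq> X}" "Pow X"] assms(1) by auto
  have ne: "card ` {I \<in> N. I \<subseteq> X} \<noteq> {}" using assms(2) by blast
  show ?thesis unfolding mrank_def
    using Max_le_iff[OF finite_imageI[OF f] ne] assms(3) by blast
qed

lemma dep_pav: "X \<in> dependents d (pav d T) \<longleftrightarrow> X \<subseteq> {1..d} \<and> (card X \<ge> 4 \<or> (card X = 3 \<and> X \<in> T))"
  unfolding dependents_def pav_def by auto

lemma pav_matroid:
  assumes cl: "closed3 T"
  shows "matroid d (pav d T)"
  unfolding matroid_def
proof (intro conjI ballI allI impI)
  show "pav d T \<subseteq> Pow {1..d}" unfolding pav_def by blast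
  show "{} \<in> pav d T" unfolding pav_def by simp
next
  fix X Y assume X: "X \<in> pav d T" and Y: "Y \<subseteq> X"
  have Xd0: "X \<subseteq> {1..d}" using X by (simp add: pav_def)
  have fX: "finite X" using finite_subset[OF Xd0 finite_atLeastAtMost] .
  have cY: "card Y \<le> card X" using card_mono[OF fX Y] .
  have Yd: "Y \<subseteq> {1..d}" using X Y unfolding pav_def by blast
  show "Y \<in> pav d T"
  proof (cases "card Y \<le> 2")
    case True thus ?thesis using Yd unfolding pav_def by blast
  next
    case False
    hence "card X = 3" "X \<notin> T" using X cY unfolding pav_def by auto
    moreover hence "card Y = 3" using False cY by linarith
    ultimately have "Y = X" using card_subset_eq[OF fX Y] by simp
    thus ?thesis using X by simp
  qed
next
  fix X Y assume X: "X \<in> pav d T" and Y: "Y \<in> pav d T" and lt: "card X < card Y"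
  have Xd: "X \<subseteq> {1..d}" and Yd: "Y \<subseteq> {1..d}" using X Y unfolding pav_def by blast+
  have fX: "finite X" using finite_subset[OF Xd finite_atLeastAtMost] .
  have fY: "finite Y" using finite_subset[OF Yd finite_atLeastAtMost] .
  have cY: "card Y \<le> 3" using Y unfolding pav_def by auto
  have YX: "Y - X \<noteq> {}"
  proof
    assume "Y - X = {}" hence "Y \<subseteq> X" by blast
    hence "card Y \<le> card X" using card_mono[OF fX] by blast
    thus False using lt by simp
  qed
  show "\<exists>e\<in>Y - X. insert e X \<in> pav d T"
  proof (cases "card X \<le> 1")
    case True
    obtain e where e: "e \<in> Y - X" using YX by blast
    have "card (insert e X) \<le> card X + 1" using fX by (simp add: card_insert_if)
    hence "card (insert e X) \<le> 2" using True by linarith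
    moreover have "insert e X \<subseteq> {1..d}" using e Xd Yd by blast
    ultimately show ?thesis using e unfolding pav_def by blast
  next
    case False
    hence cX: "card X = 2" using lt cY by linarith
    hence cY3: "card Y = 3" "Y \<notin> T" using lt cY Y unfolding pav_def by auto
    show ?thesis
    proof (cases "X \<subseteq> Y")
      case True
      obtain e where e: "e \<in> Y - X" using YX by blast
      have "card (insert e X) = 3" using e cX fX by simp
      moreover have "insert e X \<subseteq> Y" using e True by blast
      moreover have "card (insert e X) = card Y" using calculation(1) cY3(1) by simp
      ultimately have "insert e X = Y" using card_subset_eq[OF fY] by blast
      thus ?thesis using e Y by blast
    next
      case False
      obtain a b where ab: "X = {a,b}" "a \<noteq> b" using cX card_2_iff by metis
      obtain u v w where uvw: "Y = {u,v,w}" "u \<noteq> v" "v \<noteq> w" "u \<noteq> w" using cY3(1) card_3_iff by metis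
      have ns: "\<not> {a,b} \<subseteq> {u,v,w}" using False ab uvw by simp
      have yt: "{u,v,w} \<notin> T" using cY3(2) uvw by simp
      obtain f where f: "f \<in> Y - X" "insert f X \<notin> T"
        using comb[OF cl ab(2) uvw(2) uvw(4) uvw(3) yt ns] ab(1) uvw(1) by blast
      have "card (insert f X) = 3" using f cX fX by simp
      moreover have "insert f X \<subseteq> {1..d}" using f Xd Yd by blast
      ultimately show ?thesis using f unfolding pav_def by blast
    qed
  qed
qed

lemma pav_small: "X \<subseteq> {1..d} \<Longrightarrow> card X \<le> 2 \<Longrightarrow> X \<in> pav d T"
  by (simp add: pav_def)

lemma pav_noc:
  assumes "k \<le> 2" shows "circuits_size d (pav d T) k = {}"
proof -
  have "C \<notin> circuits_size d (pav d T) k" for C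
  proof
    assume "C \<in> circuits_size d (pav d T) k"
    hence "C \<subseteq> {1..d}" "C \<notin> pav d T" "card C = k"
      by (simp_all add: circuits_size_def circuits_def dependents_def)
    thus False using pav_small[of C d T] assms by simp
  qed
  thus ?thesis by blast
qed

lemma pav_plc:
  assumes cl: "closed3 T"
  shows "point_line_config d (pav d T)"
  unfolding point_line_config_def
proof (intro conjI)
  show M: "matroid d (pav d T)" using pav_matroid[OF cl] .
  show "circuits_size d (pav d T) 1 = {}" "circuits_size d (pav d T) 2 = {}"
    using pav_noc by simp_all
  show "mrank (pav d T) {1..d} \<le> 3"
  proof (rule mrank_le)
    show "finite {1..d}" by simp
    show "{} \<in> pav d T" by (simp add: pav_def)
    fix I assume "I \<in> pav d T" thus "card I \<le> 3" by (simp add: pav_def) linarith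
  qed
qed

definition T0 :: "nat \<Rightarrow> nat set set \<Rightarrow> nat set \<Rightarrow> nat set set" where
  "T0 d M x = {t. t \<subseteq> {1..d} \<and> card t = 3 \<and> (\<forall>N\<in>ext_candidates d M x. t \<notin> N)}"

lemma cand_plc: "N \<in> ext_candidates d M x \<Longrightarrow> point_line_config d N"
  unfolding ext_candidates_def by blast

lemma T0_closed: "closed3 (T0 d M x)"
  unfolding closed3_def
proof (intro allI impI)
  fix a b c e :: nat
  assume dist: "a\<noteq>b" "a\<noteq>c" "a\<noteq>e" "b\<noteq>c" "b\<noteq>e" "c\<noteq>e"
    and h1: "{a,b,c} \<in> T0 d M x" and h2: "{a,b,e} \<in> T0 d M x"
  have S: "{a,b,c,e} \<subseteq> {1..d}" using h1 h2 unfolding T0_def by blast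
  have "card {a,c,e} = 3" using dist by simp
  moreover have "{a,c,e} \<subseteq> {1..d}" using S by blast
  moreover have "\<forall>N\<in>ext_candidates d M x. {a,c,e} \<notin> N"
  proof
    fix N assume N: "N \<in> ext_candidates d M x"
    have "{a,b,c} \<notin> N" "{a,b,e} \<notin> N" using h1 h2 N unfolding T0_def by blast+
    thus "{a,c,e} \<notin> N" using plc_closed[OF cand_plc[OF N] S dist] by blast
  qed
  ultimately show "{a,c,e} \<in> T0 d M x" unfolding T0_def by blast
qed

lemma dep_eq:
  assumes "matroid d A" "matroid d B" "dep_le d A B" "dep_le d B A"
  shows "A = B"
proof -
  have PA: "A \<subseteq> Pow {1..d}" using assms(1) unfolding matroid_def by simp
  have PB: "B \<subseteq> Pow {1..d}" using assms(2) unfolding matroid_def by simp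
  have DE: "dependents d A = dependents d B" using assms(3,4) unfolding dep_le_def by (rule equalityI)
  show ?thesis
  proof (rule set_eqI)
    fix X
    show "X \<in> A \<longleftrightarrow> X \<in> B"
    proof
      assume XA: "X \<in> A"
      hence Xd: "X \<subseteq> {1..d}" using PA by blast
      show "X \<in> B"
      proof (rule ccontr)
        assume "X \<notin> B"
        hence "X \<in> dependents d B" using Xd unfolding dependents_def by simp
        hence "X \<in> dependents d A" using DE by simp
        thus False using XA unfolding dependents_def by simp
      qed
    next
      assume XB: "X \<in> B"
      hence Xd: "X \<subseteq> {1..d}" using PB by blast
      show "X \<in> A"
      proof (rule ccontr)
        assume "X \<notin> A"
        hence "X \<in> dependents d A" using Xd unfolding dependents_def by simp
        hence "X \<in> dependents d B" using DE by simp
        thus False using XB unfolding dependents_def by simp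
      qed
    qed
  qed
qed

lemma the_least:
  assumes P: "P \<in> C" and least: "\<forall>N\<in>C. dep_le d P N" and mat: "\<forall>N\<in>C. matroid d N"
  shows "(THE N. minimal_in d N C) = P"
proof (rule the_equality)
  have "\<not> dep_lt d N' P" if N': "N' \<in> C" for N'
  proof
    assume "dep_lt d N' P"
    hence "dep_le d N' P" "N' \<noteq> P" unfolding dep_lt_def by simp_all
    moreover have "dep_le d P N'" using least N' by blast
    moreover have "matroid d N'" "matroid d P" using mat N' P by blast+
    ultimately show False using dep_eq by metis
  qed
  thus "minimal_in d P C" unfolding minimal_in_def using P by blast
next
  fix Q assume "minimal_in d Q C"
  hence "Q \<in> C" "\<not> dep_lt d P Q" using P unfolding minimal_in_def by blast+
  moreover have "dep_le d P Q" using least \<open>Q \<in> C\<close> by blast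
  ultimately show "Q = P" unfolding dep_lt_def by blast
qed

lemma ext_props:
  assumes x: "x \<subseteq> {1..d}" "card x = 3"
  shows "ext d M x \<in> ext_candidates d M x \<and> (\<forall>N\<in>ext_candidates d M x. dep_le d (ext d M x) N)"
proof -
  define P where "P = pav d (T0 d M x)"
  have plc: "point_line_config d P" unfolding P_def by (rule pav_plc[OF T0_closed])
  have cand: "P \<in> ext_candidates d M x"
    unfolding ext_candidates_def
  proof (intro CollectI conjI plc ballI allI impI)
    fix L T assume L: "L \<in> lines d M" and T: "T \<subseteq> L \<and> card T = 3"
    have "T \<subseteq> {1..d}" using L T unfolding lines_def by blast
    moreover have "\<forall>N\<in>ext_candidates d M x. T \<notin> N"
      using L T unfolding ext_candidates_def dependents_def by blast
    ultimately have "T \<in> T0 d M x" using T unfolding T0_def by blast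
    thus "T \<in> dependents d P" unfolding P_def dep_pav using T \<open>T \<subseteq> {1..d}\<close> by blast
  next
    have "\<forall>N\<in>ext_candidates d M x. x \<notin> N"
      unfolding ext_candidates_def dependents_def by blast
    hence "x \<in> T0 d M x" using x unfolding T0_def by blast
    thus "x \<in> dependents d P" unfolding P_def dep_pav using x by blast
  qed
  have least: "\<forall>N\<in>ext_candidates d M x. dep_le d P N"
  proof
    fix N assume N: "N \<in> ext_candidates d M x"
    show "dep_le d P N" unfolding dep_le_def
    proof
      fix X assume "X \<in> dependents d P"
      hence X: "X \<subseteq> {1..d}" "card X \<ge> 4 \<or> (card X = 3 \<and> X \<in> T0 d M x)"
        unfolding P_def dep_pav by blast+
      have "X \<notin> N"
      proof (cases "card X \<ge> 4")
        case True thus ?thesis using plc_big[OF cand_plc[OF N] X(1)] by blast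
      next
        case False thus ?thesis using X N unfolding T0_def by blast
      qed
      thus "X \<in> dependents d N" using X(1) unfolding dependents_def by blast
    qed
  qed
  have "ext d M x = P" unfolding ext_def
    using the_least[OF cand least] cand_plc plc_matroid by blast
  thus ?thesis using cand least by simp
qed



lemma line3_dep:
  assumes L: "L \<in> lines d M" and T: "T \<subseteq> L" "card T = 3"
  shows "T \<in> dependents d M"
proof -
  have Ld: "L \<subseteq> {1..d}" and r: "mrank M L = 2" using L unfolding lines_def by simp_all
  have fL: "finite L" using finite_subset[OF Ld finite_atLeastAtMost] .
  have "T \<notin> M"
  proof
    assume "T \<in> M"
    hence "card T \<le> mrank M L" using mrank_ge[OF fL _ T(1)] by blast
    thus False using r T(2) by simp
  qed
  thus ?thesis using T(1) Ld unfolding dependents_def by blast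
qed

lemma part_i:
  assumes x: "x \<subseteq> {1..d}" "card x = 3" and N: "point_line_config d N" "dep_le d M N"
  shows "dep_le d (ext d M x) N \<longleftrightarrow> x \<in> circuits_size d N 3"
proof
  assume le: "dep_le d (ext d M x) N"
  have "x \<in> dependents d (ext d M x)" using ext_props[OF x, of M] unfolding ext_candidates_def by blast
  hence "x \<in> dependents d N" using le unfolding dep_le_def by blast
  hence "x \<notin> N" unfolding dependents_def by blast
  thus "x \<in> circuits_size d N 3" using plc_dep3[OF N(1) x] by blast
next
  assume c: "x \<in> circuits_size d N 3"
  have "N \<in> ext_candidates d M x"
    unfolding ext_candidates_def
  proof (intro CollectI conjI N(1) ballI allI impI)
    fix L T assume "L \<in> lines d M" "T \<subseteq> L \<and> card T = 3"
    hence "T \<in> dependents d M" using line3_dep by blast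
    thus "T \<in> dependents d N" using N(2) unfolding dep_le_def by blast
  next
    have "x \<notin> N" using plc_dep3[OF N(1) x] c by blast
    thus "x \<in> dependents d N" using x(1) unfolding dependents_def by blast
  qed
  thus "dep_le d (ext d M x) N" using ext_props[OF x, of M] by blast
qed

lemma exists_line:
  assumes P: "point_line_config d M" and T: "T \<subseteq> {1..d}" "card T = 3" "T \<notin> M"
  shows "\<exists>L\<in>lines d M. T \<subseteq> L"
proof -
  have fT: "finite T" using finite_subset[OF T(1) finite_atLeastAtMost] .
  have rT: "mrank M T = 2"
  proof -
    have "{I \<in> M. I \<subseteq> T} \<subseteq> Pow T" by blast
    hence fS: "finite {I \<in> M. I \<subseteq> T}" using finite_subset fT by blast
    have le: "\<forall>s\<in>card ` {I \<in> M. I \<subseteq> T}. s \<le> 2"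
    proof
      fix s assume "s \<in> card ` {I \<in> M. I \<subseteq> T}"
      then obtain I where I: "I \<in> M" "I \<subseteq> T" "s = card I" by blast
      have "I \<noteq> T" using I T(3) by blast
      hence "I \<subset> T" using I(2) by blast
      hence "card I < card T" using psubset_card_mono[OF fT] by blast
      thus "s \<le> 2" using I(3) T(2) by simp
    qed
    obtain p q r where pqr: "T = {p,q,r}" "p \<noteq> q" "q \<noteq> r" "p \<noteq> r" using T(2) card_3_iff by metis
    have "{p,q} \<subseteq> {1..d}" using T(1) pqr(1) by blast
    moreover have "card {p,q} \<le> 2" using pqr(2) by simp
    ultimately have "{p,q} \<in> M" using plc_small_indep[OF P] by blast
    moreover have "{p,q} \<subseteq> T" using pqr(1) by blast
    ultimately have "card {p,q} \<in> card ` {I \<in> M. I \<subseteq> T}" by blast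
    moreover have "card {p,q} = 2" using pqr(2) by simp
    ultimately have "2 \<in> card ` {I \<in> M. I \<subseteq> T}" by (simp only:)
    hence "Max (card ` {I \<in> M. I \<subseteq> T}) = 2"
      by (rule Max_eqI[OF finite_imageI[OF fS], rotated]) (use le in blast)
    thus ?thesis unfolding mrank_def .
  qed
  define Q where "Q = (\<lambda>k. \<exists>L. T \<subseteq> L \<and> L \<subseteq> {1..d} \<and> card L \<ge> 3 \<and> mrank M L = 2 \<and> card L = k)"
  have Q3: "Q 3" unfolding Q_def using T rT by (intro exI[of _ T]) simp
  have Qb: "\<forall>k. Q k \<longrightarrow> k \<le> d"
  proof (intro allI impI)
    fix k assume "Q k"
    then obtain L where L: "L \<subseteq> {1..d}" "card L = k" unfolding Q_def by blast
    have "card L \<le> card {1..d}" using card_mono[OF finite_atLeastAtMost L(1)] .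
    thus "k \<le> d" using L(2) by simp
  qed
  obtain k where k: "Q k" "\<forall>j. Q j \<longrightarrow> j \<le> k" using Nat.ex_has_greatest_nat[OF Q3 Qb] by blast
  then obtain L where L: "T \<subseteq> L" "L \<subseteq> {1..d}" "card L \<ge> 3" "mrank M L = 2" "card L = k"
    unfolding Q_def by blast
  have "L \<in> lines d M"
    unfolding lines_def
  proof (intro CollectI conjI L(2) L(3) L(4) allI impI)
    fix L' assume L': "L \<subset> L' \<and> L' \<subseteq> {1..d} \<and> 3 \<le> card L'"
    show "mrank M L' \<noteq> 2"
    proof
      assume r: "mrank M L' = 2"
      have fL': "finite L'" using finite_subset[of L' "{1..d}"] L' by simp
      have "Q (card L')" unfolding Q_def using L' L(1) r by blast
      hence "card L' \<le> k" using k(2) by blast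
      moreover have "card L < card L'" using psubset_card_mono[OF fL'] L' by blast
      ultimately show False using L(5) by simp
    qed
  qed
  thus ?thesis using L(1) by blast
qed

lemma dep_le_ext:
  assumes P: "point_line_config d M" and x: "x \<subseteq> {1..d}" "card x = 3"
  shows "dep_le d M (ext d M x)"
  unfolding dep_le_def
proof
  fix X assume "X \<in> dependents d M"
  hence Xd: "X \<subseteq> {1..d}" and XM: "X \<notin> M" unfolding dependents_def by blast+
  have E: "ext d M x \<in> ext_candidates d M x" using ext_props[OF x, of M] by blast
  have EP: "point_line_config d (ext d M x)" using cand_plc[OF E] .
  consider "card X \<le> 2" | "card X = 3" | "card X \<ge> 4" by linarith
  thus "X \<in> dependents d (ext d M x)"
  proof cases
    case 1 thus ?thesis using plc_small_indep[OF P Xd] XM by blast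
  next
    case 2
    then obtain L where L: "L \<in> lines d M" "X \<subseteq> L" using exists_line[OF P Xd _ XM] by blast
    thus ?thesis using E 2 unfolding ext_candidates_def by blast
  next
    case 3
    hence "X \<notin> ext d M x" using plc_big[OF EP Xd] by blast
    thus ?thesis using Xd unfolding dependents_def by blast
  qed
qed



lemma cs_dep: "y \<in> circuits_size d N k \<Longrightarrow> y \<in> dependents d N"
  unfolding circuits_size_def circuits_def by blast

theorem mainTheorem7:
  fixes d n :: nat and M :: "nat set set" and x :: "nat set" and xs :: "nat \<Rightarrow> nat set"
  assumes plcM: "point_line_config d M"
    and rk3: "mrank M {1..d} = 3"
    and x3: "x \<subseteq> {1..d}" "card x = 3" "x \<notin> circuits_size d M 3"
    and xs3: "\<forall>i\<in>{1..n}. xs i \<subseteq> {1..d} \<and> card (xs i) = 3 \<and> xs i \<notin> circuits_size d M 3"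
  shows "(\<forall>N. point_line_config d N \<and> dep_le d M N \<longrightarrow>
            (dep_le d (ext d M x) N \<longleftrightarrow> x \<in> circuits_size d N 3))
      \<and> ((n \<ge> 1 \<and>
          (\<forall>i\<in>{1..n}. (if i = n then xs 1 else xs (i + 1)) \<in> circuits_size d (ext d M (xs i)) 3) \<and>
          (\<forall>y\<in>circuits_size d (ext d M (xs n)) 3. y \<in> circuits_size d M 3 \<union> xs ` {1..n}))
         \<longrightarrow> minimal_in d (ext d M (xs n))
               {N. matroid d N \<and> dep_lt d M N \<and> circuits_size d N 1 = {} \<and> circuits_size d N 2 = {}})"
proof -
  have partI: "\<forall>N. point_line_config d N \<and> dep_le d M N \<longrightarrow>
            (dep_le d (ext d M x) N \<longleftrightarrow> x \<in> circuits_size d N 3)"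
    using part_i[OF x3(1) x3(2)] by blast
  have partII: "(n \<ge> 1 \<and>
          (\<forall>i\<in>{1..n}. (if i = n then xs 1 else xs (i + 1)) \<in> circuits_size d (ext d M (xs i)) 3) \<and>
          (\<forall>y\<in>circuits_size d (ext d M (xs n)) 3. y \<in> circuits_size d M 3 \<union> xs ` {1..n}))
         \<longrightarrow> minimal_in d (ext d M (xs n))
               {N. matroid d N \<and> dep_lt d M N \<and> circuits_size d N 1 = {} \<and> circuits_size d N 2 = {}}"
  proof
    assume H: "n \<ge> 1 \<and>
          (\<forall>i\<in>{1..n}. (if i = n then xs 1 else xs (i + 1)) \<in> circuits_size d (ext d M (xs i)) 3) \<and>
          (\<forall>y\<in>circuits_size d (ext d M (xs n)) 3. y \<in> circuits_size d M 3 \<union> xs ` {1..n})"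
    have n1: "n \<ge> 1" using H by blast
    have cyc: "\<And>i. i \<in> {1..n} \<Longrightarrow> (if i = n then xs 1 else xs (i + 1)) \<in> circuits_size d (ext d M (xs i)) 3"
      using H by blast
    have clos: "\<And>y. y \<in> circuits_size d (ext d M (xs n)) 3 \<Longrightarrow> y \<in> circuits_size d M 3 \<union> xs ` {1..n}"
      using H by blast
    have xsi: "\<And>i. i \<in> {1..n} \<Longrightarrow> xs i \<subseteq> {1..d}" "\<And>i. i \<in> {1..n} \<Longrightarrow> card (xs i) = 3"
      "\<And>i. i \<in> {1..n} \<Longrightarrow> xs i \<notin> circuits_size d M 3" using xs3 by blast+
    have nn: "n \<in> {1..n}" using n1 by simp
    define E where "E = ext d M (xs n)"
    define B where "B = {N. matroid d N \<and> dep_lt d M N \<and> circuits_size d N 1 = {} \<and> circuits_size d N 2 = {}}"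
    have Ecand: "E \<in> ext_candidates d M (xs n)" and Eleast: "\<forall>N\<in>ext_candidates d M (xs n). dep_le d E N"
      using ext_props[OF xsi(1)[OF nn] xsi(2)[OF nn], of M] unfolding E_def by blast+
    have EP: "point_line_config d E" using cand_plc[OF Ecand] .
    have Mmat: "matroid d M" using plcM by (rule plc_matroid)
    have Emat: "matroid d E" using EP by (rule plc_matroid)
    have xnE: "xs n \<in> dependents d E" using Ecand unfolding ext_candidates_def by blast
    have xnM: "xs n \<in> M" using plc_dep3[OF plcM xsi(1)[OF nn] xsi(2)[OF nn]] xsi(3)[OF nn] by blast
    have MleE: "dep_le d M E" unfolding E_def by (rule dep_le_ext[OF plcM xsi(1)[OF nn] xsi(2)[OF nn]])
    have "M \<noteq> E" using xnE xnM unfolding dependents_def by blast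
    hence EB: "E \<in> B" unfolding B_def dep_lt_def using Emat MleE EP
      unfolding point_line_config_def by blast
    have "\<not> dep_lt d N' E" if N'B: "N' \<in> B" for N'
    proof
      assume lt: "dep_lt d N' E"
      have N'le: "dep_le d N' E" and N'ne: "N' \<noteq> E" using lt unfolding dep_lt_def by blast+
      have N'mat: "matroid d N'" and MN': "dep_le d M N'" and MneN': "M \<noteq> N'"
        and c1: "circuits_size d N' 1 = {}" and c2: "circuits_size d N' 2 = {}"
        using N'B unfolding B_def dep_lt_def by blast+
      have N'P: "point_line_config d N'"
        unfolding point_line_config_def
      proof (intro conjI N'mat c1 c2)
        show "mrank N' {1..d} \<le> 3"
        proof (rule mrank_le)
          show "finite {1..d}" by simp
          show "{} \<in> N'" using N'mat unfolding matroid_def by simp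
          fix I assume I: "I \<in> N'" "I \<subseteq> {1..d}"
          show "card I \<le> 3"
          proof (rule ccontr)
            assume "\<not> card I \<le> 3"
            hence "card I \<ge> 4" by simp
            hence "I \<notin> M" using plc_big[OF plcM I(2)] by blast
            hence "I \<in> dependents d M" using I(2) unfolding dependents_def by blast
            hence "I \<in> dependents d N'" using MN' unfolding dep_le_def by blast
            thus False using I(1) unfolding dependents_def by blast
          qed
        qed
      qed
      obtain y where y1: "y \<in> dependents d N'" and y2: "y \<notin> dependents d M"
      proof -
        have "\<not> dep_le d N' M"
        proof
          assume "dep_le d N' M"
          hence "M = N'" using dep_eq[OF Mmat N'mat MN'] by blast
          thus False using MneN' by blast
        qed
        thus ?thesis using that unfolding dep_le_def by blast
      qed
      have yd: "y \<subseteq> {1..d}" and yN': "y \<notin> N'" using y1 unfolding dependents_def by blast+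
      have yM: "y \<in> M" using y2 yd unfolding dependents_def by blast
      have cy: "card y = 3"
      proof -
        have "\<not> card y \<le> 2" using plc_small_indep[OF N'P yd] yN' by blast
        moreover have "\<not> card y \<ge> 4" using plc_big[OF plcM yd] yM by blast
        ultimately show ?thesis by linarith
      qed
      have "y \<in> dependents d E" using y1 N'le unfolding dep_le_def by blast
      hence "y \<notin> E" unfolding dependents_def by blast
      hence "y \<in> circuits_size d E 3" using plc_dep3[OF EP yd cy] by blast
      hence "y \<in> circuits_size d M 3 \<union> xs ` {1..n}" using clos unfolding E_def by blast
      moreover have "y \<notin> circuits_size d M 3" using plc_dep3[OF plcM yd cy] yM by blast
      ultimately obtain i where i: "i \<in> {1..n}" "y = xs i" by blast
      have step: "\<forall>k. i + k \<le> n \<longrightarrow> xs (i + k) \<notin> N'"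
      proof
        fix k show "i + k \<le> n \<longrightarrow> xs (i + k) \<notin> N'"
        proof (induction k)
          case 0 show ?case using yN' i(2) by simp
        next
          case (Suc k)
          show ?case
          proof
            assume le: "i + Suc k \<le> n"
            hence ik: "i + k \<in> {1..n}" "i + k \<noteq> n" using i(1) by auto
            have notin: "xs (i + k) \<notin> N'" using Suc.IH le by simp
            have "xs (i + k) \<in> circuits_size d N' 3"
              using plc_dep3[OF N'P xsi(1)[OF ik(1)] xsi(2)[OF ik(1)]] notin by blast
            hence le2: "dep_le d (ext d M (xs (i + k))) N'"
              using part_i[OF xsi(1)[OF ik(1)] xsi(2)[OF ik(1)] N'P MN'] by blast
            have "xs (i + k + 1) \<in> circuits_size d (ext d M (xs (i + k))) 3"
              using cyc[OF ik(1)] ik(2) by simp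
            hence "xs (i + k + 1) \<in> dependents d N'"
              using cs_dep le2 unfolding dep_le_def by blast
            thus "xs (i + Suc k) \<notin> N'" unfolding dependents_def by simp
          qed
        qed
      qed
      have "xs n \<notin> N'" using step[rule_format, of "n - i"] i(1) by simp
      hence "xs n \<in> circuits_size d N' 3"
        using plc_dep3[OF N'P xsi(1)[OF nn] xsi(2)[OF nn]] by blast
      hence "dep_le d E N'"
        using part_i[OF xsi(1)[OF nn] xsi(2)[OF nn] N'P MN'] unfolding E_def by blast
      hence "N' = E" using dep_eq[OF N'mat Emat N'le] by blast
      thus False using N'ne by blast
    qed
    thus "minimal_in d (ext d M (xs n)) {N. matroid d N \<and> dep_lt d M N \<and> circuits_size d N 1 = {} \<and> circuits_size d N 2 = {}}"
      using EB unfolding minimal_in_def B_def[symmetric] E_def[symmetric] by blast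
  qed
  show ?thesis using partI partII by blast
qed


end
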